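(* Let $(M,\varphi,\xi,\eta,g)$ be a Sasakian manifold with nonnegative $\varphi$-bisectional curvature. Let $x\in M$ and $X,W\in T_xM$ be such that $\eta(X)=0$ and $X,\varphi X,W$ are mutually orthonormal. Then $$R(X,W,X,W)+R(\varphi X,W,\varphi X,W)\ge 0,$$ where $R(X,Y,Z,U)=g(R(X,Y)U,Z)$, so that $R(X,Y,X,Y)=g(R(X,Y)Y,X)$ is the sectional curvature of the plane spanned by orthonormal $X,Y$.
   Context: A Sasakian manifold $(M,\varphi,\xi,\eta,g)$ is a contact metric manifold satisfying $(\nabla_X\varphi)Y=g(X,Y)\xi-\eta(Y)X$. It has nonnegative $\varphi$-bisectional curvature if $K(X,Y)+K(X,\varphi Y)\ge 0$ for every $x\in M$ and all $X,Y\in T_xM$ such that $X,Y,\varphi Y,\xi_x$ are mutually orthonormal, where $K(X,Y)=g(R(X,Y)Y,X)$. *)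

theory Defs
  imports "HOL-Analysis.Analysis"
begin

text \<open>
  Since all notions in the statement
  (Levi-Civita connection, curvature, the Sasakian condition, phi-bisectional curvature)
  are local, we work on an open set U of the coordinate space real^'n (a chart of M),
  with tensor fields given by their coordinate expressions.
  Metric: G p is the (symmetric, positive definite) Gram matrix at p, g_p(u,v) = u . (G p v).
  phi: Phi p is the matrix of the (1,1)-tensor phi at p; xi is a vector field;
  eta p is the coefficient vector of the 1-form eta at p, eta_p(v) = eta p . v.
\<close>

fun Ck :: "nat \<Rightarrow> 'a::real_normed_vector set \<Rightarrow> ('a \<Rightarrow> 'b::real_normed_vector) \<Rightarrow> bool" where
  "Ck 0 U f = continuous_on U f"
| "Ck (Suc k) U f = (f differentiable_on U \<and> (\<forall>v. Ck k U (\<lambda>p. frechet_derivative f (at p) v)))"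

definition smooth_on :: "'a::real_normed_vector set \<Rightarrow> ('a \<Rightarrow> 'b::real_normed_vector) \<Rightarrow> bool" where
  "smooth_on U f \<longleftrightarrow> (\<forall>k. Ck k U f)"

definition gm :: "(real^'n \<Rightarrow> real^'n^'n) \<Rightarrow> real^'n \<Rightarrow> real^'n \<Rightarrow> real^'n \<Rightarrow> real" where
  "gm G p u v = u \<bullet> (G p *v v)"

definition dgm :: "(real^'n \<Rightarrow> real^'n^'n) \<Rightarrow> real^'n \<Rightarrow> real^'n \<Rightarrow> real^'n \<Rightarrow> real^'n \<Rightarrow> real" where
  "dgm G p w a b = a \<bullet> (frechet_derivative G (at p) w *v b)"

text \<open>Christoffel symbols: Gamma_p(u,v) is the vector with
  g_p(Gamma_p(u,v), w) = 1/2 (dG(u)(v,w) + dG(v)(u,w) - dG(w)(u,v)).\<close>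
definition Christoffel :: "(real^'n \<Rightarrow> real^'n^'n) \<Rightarrow> real^'n \<Rightarrow> real^'n \<Rightarrow> real^'n \<Rightarrow> real^'n" where
  "Christoffel G p u v = matrix_inv (G p) *v
     (\<chi> k. (dgm G p u v (axis k 1) + dgm G p v u (axis k 1) - dgm G p (axis k 1) u v) / 2)"

definition nabla :: "(real^'n \<Rightarrow> real^'n^'n) \<Rightarrow> real^'n \<Rightarrow> (real^'n \<Rightarrow> real^'n) \<Rightarrow> real^'n \<Rightarrow> real^'n" where
  "nabla G u Y p = frechet_derivative Y (at p) u + Christoffel G p u (Y p)"

text \<open>Curvature R(u,v)w = nabla_u nabla_v w - nabla_v nabla_u w - nabla_[u,v] w,
  computed with the constant coordinate extensions of u, v, w (so [u,v] = 0).\<close>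
definition curv :: "(real^'n \<Rightarrow> real^'n^'n) \<Rightarrow> real^'n \<Rightarrow> real^'n \<Rightarrow> real^'n \<Rightarrow> real^'n \<Rightarrow> real^'n" where
  "curv G p u v w = nabla G u (\<lambda>q. nabla G v (\<lambda>r. w) q) p - nabla G v (\<lambda>q. nabla G u (\<lambda>r. w) q) p"

definition Rtensor :: "(real^'n \<Rightarrow> real^'n^'n) \<Rightarrow> real^'n \<Rightarrow> real^'n \<Rightarrow> real^'n \<Rightarrow> real^'n \<Rightarrow> real^'n \<Rightarrow> real" where
  "Rtensor G p X Y Z U = gm G p (curv G p X Y U) Z"

definition Kcurv :: "(real^'n \<Rightarrow> real^'n^'n) \<Rightarrow> real^'n \<Rightarrow> real^'n \<Rightarrow> real^'n \<Rightarrow> real" where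
  "Kcurv G p X Y = gm G p (curv G p X Y Y) X"

definition orthonormal_list :: "(real^'n \<Rightarrow> real^'n^'n) \<Rightarrow> real^'n \<Rightarrow> (real^'n) list \<Rightarrow> bool" where
  "orthonormal_list G p vs \<longleftrightarrow>
     (\<forall>i<length vs. \<forall>j<length vs. gm G p (vs!i) (vs!j) = (if i = j then 1 else 0))"

text \<open>(nabla_u phi) v, computed with the constant extension of v.\<close>
definition nabla_phi :: "(real^'n \<Rightarrow> real^'n^'n) \<Rightarrow> (real^'n \<Rightarrow> real^'n^'n) \<Rightarrow> real^'n \<Rightarrow> real^'n \<Rightarrow> real^'n \<Rightarrow> real^'n" where
  "nabla_phi G Phi p u v = nabla G u (\<lambda>q. Phi q *v v) p - Phi p *v nabla G u (\<lambda>q. v) p"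

text \<open>d eta(u,v) with the convention d eta(X,Y) = 1/2 (X eta(Y) - Y eta(X) - eta([X,Y])).\<close>
definition d_eta :: "(real^'n \<Rightarrow> real^'n) \<Rightarrow> real^'n \<Rightarrow> real^'n \<Rightarrow> real^'n \<Rightarrow> real" where
  "d_eta eta p u v = ((frechet_derivative eta (at p) u) \<bullet> v - (frechet_derivative eta (at p) v) \<bullet> u) / 2"

definition riemannian_metric_on :: "(real^'n) set \<Rightarrow> (real^'n \<Rightarrow> real^'n^'n) \<Rightarrow> bool" where
  "riemannian_metric_on U G \<longleftrightarrow> smooth_on U G \<and>
     (\<forall>p\<in>U. transpose (G p) = G p \<and> (\<forall>v. v \<noteq> 0 \<longrightarrow> gm G p v v > 0))"

definition almost_contact_metric_on ::
  "(real^'n) set \<Rightarrow> (real^'n \<Rightarrow> real^'n^'n) \<Rightarrow> (real^'n \<Rightarrow> real^'n^'n) \<Rightarrow> (real^'n \<Rightarrow> real^'n) \<Rightarrow> (real^'n \<Rightarrow> real^'n) \<Rightarrow> bool" where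
  "almost_contact_metric_on U G Phi xi eta \<longleftrightarrow>
     open U \<and> riemannian_metric_on U G \<and> smooth_on U Phi \<and> smooth_on U xi \<and> smooth_on U eta \<and>
     (\<forall>p\<in>U. eta p \<bullet> xi p = 1 \<and>
        (\<forall>v. Phi p *v (Phi p *v v) = - v + (eta p \<bullet> v) *\<^sub>R xi p) \<and>
        (\<forall>u v. gm G p (Phi p *v u) (Phi p *v v) = gm G p u v - (eta p \<bullet> u) * (eta p \<bullet> v)))"

definition contact_metric_on ::
  "(real^'n) set \<Rightarrow> (real^'n \<Rightarrow> real^'n^'n) \<Rightarrow> (real^'n \<Rightarrow> real^'n^'n) \<Rightarrow> (real^'n \<Rightarrow> real^'n) \<Rightarrow> (real^'n \<Rightarrow> real^'n) \<Rightarrow> bool" where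
  "contact_metric_on U G Phi xi eta \<longleftrightarrow> almost_contact_metric_on U G Phi xi eta \<and>
     (\<forall>p\<in>U. \<forall>u v. d_eta eta p u v = gm G p u (Phi p *v v))"

definition sasakian_on ::
  "(real^'n) set \<Rightarrow> (real^'n \<Rightarrow> real^'n^'n) \<Rightarrow> (real^'n \<Rightarrow> real^'n^'n) \<Rightarrow> (real^'n \<Rightarrow> real^'n) \<Rightarrow> (real^'n \<Rightarrow> real^'n) \<Rightarrow> bool" where
  "sasakian_on U G Phi xi eta \<longleftrightarrow> contact_metric_on U G Phi xi eta \<and>
     (\<forall>p\<in>U. \<forall>u v. nabla_phi G Phi p u v = gm G p u v *\<^sub>R xi p - (eta p \<bullet> v) *\<^sub>R u)"

definition nonneg_phi_bisectional_on ::
  "(real^'n) set \<Rightarrow> (real^'n \<Rightarrow> real^'n^'n) \<Rightarrow> (real^'n \<Rightarrow> real^'n^'n) \<Rightarrow> (real^'n \<Rightarrow> real^'n) \<Rightarrow> bool" where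
  "nonneg_phi_bisectional_on U G Phi xi \<longleftrightarrow>
     (\<forall>p\<in>U. \<forall>X Y. orthonormal_list G p [X, Y, Phi p *v Y, xi p] \<longrightarrow>
        Kcurv G p X Y + Kcurv G p X (Phi p *v Y) \<ge> 0)"

end

theory Submission
  imports Defs
begin

lemma fd_works:
  assumes "f differentiable (at p)"
  shows "(f has_derivative frechet_derivative f (at p)) (at p)"
  using assms frechet_derivative_works by blast

lemma has_fd:
  assumes "(f has_derivative D) (at p)"
  shows "f differentiable (at p)" "frechet_derivative f (at p) v = D v"
proof -
  show "f differentiable (at p)" using assms unfolding differentiable_def by blast
  have "D = frechet_derivative f (at p)" by (rule frechet_derivative_at[OF assms])
  then show "frechet_derivative f (at p) v = D v" by simp
qed

lemma fd_linear:
  assumes "f differentiable (at p)"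
  shows "linear (frechet_derivative f (at p))"
  using fd_works[OF assms] has_derivative_linear by blast

lemma fd_open_eq:
  assumes "open S" "p \<in> S" "\<And>q. q \<in> S \<Longrightarrow> f q = g q" "f differentiable (at p)"
  shows "g differentiable (at p)" "frechet_derivative g (at p) = frechet_derivative f (at p)"
proof -
  have "(g has_derivative frechet_derivative f (at p)) (at p)"
    by (rule has_derivative_transform_within_open[OF fd_works[OF assms(4)] assms(1,2)]) (use assms(3) in auto)
  note d = this
  show "g differentiable (at p)" using has_fd(1)[OF d] .
  show "frechet_derivative g (at p) = frechet_derivative f (at p)"
    by (rule ext) (rule has_fd(2)[OF d])
qed

lemma fd_blin:
  assumes "bounded_linear L" "f differentiable (at p)"
  shows "(\<lambda>q. L (f q)) differentiable (at p)"
    "frechet_derivative (\<lambda>q. L (f q)) (at p) v = L (frechet_derivative f (at p) v)"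
proof -
  have "((\<lambda>q. L (f q)) has_derivative (\<lambda>v. L (frechet_derivative f (at p) v))) (at p)"
    using bounded_linear.has_derivative[OF assms(1) fd_works[OF assms(2)]] .
  then show "(\<lambda>q. L (f q)) differentiable (at p)"
    "frechet_derivative (\<lambda>q. L (f q)) (at p) v = L (frechet_derivative f (at p) v)"
    using has_fd by blast+
qed

lemma fd_add:
  assumes "f differentiable (at p)" "g differentiable (at p)"
  shows "(\<lambda>q. f q + g q) differentiable (at p)"
    "frechet_derivative (\<lambda>q. f q + g q) (at p) v = frechet_derivative f (at p) v + frechet_derivative g (at p) v"
proof -
  have "((\<lambda>q. f q + g q) has_derivative (\<lambda>v. frechet_derivative f (at p) v + frechet_derivative g (at p) v)) (at p)"
    using has_derivative_add[OF fd_works[OF assms(1)] fd_works[OF assms(2)]] .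
  then show "(\<lambda>q. f q + g q) differentiable (at p)"
    "frechet_derivative (\<lambda>q. f q + g q) (at p) v = frechet_derivative f (at p) v + frechet_derivative g (at p) v"
    using has_fd by blast+
qed

lemma fd_scale:
  assumes "f differentiable (at p)"
  shows "(\<lambda>q. c *\<^sub>R f q) differentiable (at p)"
    "frechet_derivative (\<lambda>q. c *\<^sub>R f q) (at p) v = c *\<^sub>R frechet_derivative f (at p) v"
  using fd_blin[OF bounded_linear_scaleR_right[of c] assms] by simp_all

lemma fd_sum:
  assumes "finite I" "\<And>i. i \<in> I \<Longrightarrow> f i differentiable (at p)"
  shows "(\<lambda>q. \<Sum>i\<in>I. f i q) differentiable (at p)"
    "frechet_derivative (\<lambda>q. \<Sum>i\<in>I. f i q) (at p) v = (\<Sum>i\<in>I. frechet_derivative (f i) (at p) v)"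
proof -
  have "((\<lambda>q. \<Sum>i\<in>I. f i q) has_derivative (\<lambda>v. \<Sum>i\<in>I. frechet_derivative (f i) (at p) v)) (at p)"
    by (intro has_derivative_sum fd_works assms(2))
  then show "(\<lambda>q. \<Sum>i\<in>I. f i q) differentiable (at p)"
    "frechet_derivative (\<lambda>q. \<Sum>i\<in>I. f i q) (at p) v = (\<Sum>i\<in>I. frechet_derivative (f i) (at p) v)"
    using has_fd by blast+
qed

lemma fd_scaleR2:
  fixes a :: "'a::real_normed_vector \<Rightarrow> real"
  assumes "a differentiable (at p)" "f differentiable (at p)"
  shows "(\<lambda>q. a q *\<^sub>R f q) differentiable (at p)"
    "frechet_derivative (\<lambda>q. a q *\<^sub>R f q) (at p) v
       = a p *\<^sub>R frechet_derivative f (at p) v + frechet_derivative a (at p) v *\<^sub>R f p"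
proof -
  have "((\<lambda>q. a q *\<^sub>R f q) has_derivative (\<lambda>v. a p *\<^sub>R frechet_derivative f (at p) v + frechet_derivative a (at p) v *\<^sub>R f p)) (at p)"
    using has_derivative_scaleR[OF fd_works[OF assms(1)] fd_works[OF assms(2)]] .
  then show "(\<lambda>q. a q *\<^sub>R f q) differentiable (at p)"
    "frechet_derivative (\<lambda>q. a q *\<^sub>R f q) (at p) v
       = a p *\<^sub>R frechet_derivative f (at p) v + frechet_derivative a (at p) v *\<^sub>R f p"
    using has_fd by blast+
qed

lemma dist_aux: "dist p (p + a + b) = norm (a + b)" for p a b :: "'a::real_normed_vector"
  by (metis dist_norm dist_commute add_diff_cancel_left' add.assoc)

lemma schwarz_aux:
  fixes f :: "'a::real_normed_vector \<Rightarrow> real"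
  assumes S: "open S" "p \<in> S"
    and d1: "\<And>q. q \<in> S \<Longrightarrow> (f has_derivative f1 q) (at q)"
    and d2: "\<And>q w. q \<in> S \<Longrightarrow> ((\<lambda>q. f1 q w) has_derivative f2 q w) (at q)"
    and t: "0 < t" "cball p (t * (norm u + norm v)) \<subseteq> S"
  shows "\<exists>c. dist p c \<le> t * (norm u + norm v) \<and>
     f (p + t *\<^sub>R u + t *\<^sub>R v) - f (p + t *\<^sub>R u) - f (p + t *\<^sub>R v) + f p = t * (t * f2 c u v)"
proof -
  have inS: "p + s *\<^sub>R u + r *\<^sub>R v \<in> S" if "0 \<le> s" "s \<le> t" "0 \<le> r" "r \<le> t" for s r
  proof -
    have "norm (s *\<^sub>R u + r *\<^sub>R v) \<le> s * norm u + r * norm v"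
      using norm_triangle_ineq[of "s *\<^sub>R u" "r *\<^sub>R v"] that by simp
    also have "\<dots> \<le> t * norm u + t * norm v"
      using that by (intro add_mono mult_right_mono) auto
    finally have "dist p (p + s *\<^sub>R u + r *\<^sub>R v) \<le> t * (norm u + norm v)"
      using dist_aux[of p "s *\<^sub>R u" "r *\<^sub>R v"] by (simp add: algebra_simps)
    then show ?thesis using t(2) by auto
  qed
  define \<phi> where "\<phi> s = f (p + s *\<^sub>R u + t *\<^sub>R v) - f (p + s *\<^sub>R u)" for s
  have dphi: "(\<phi> has_derivative (\<lambda>h. h * (f1 (p + s *\<^sub>R u + t *\<^sub>R v) u - f1 (p + s *\<^sub>R u) u))) (at s)"
    if "0 \<le> s" "s \<le> t" for s
  proof -
    have q1: "p + s *\<^sub>R u + t *\<^sub>R v \<in> S" using inS[of s t] that t(1) by auto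
    have q2: "p + s *\<^sub>R u \<in> S" using inS[of s 0] that t(1) by auto
    have l1: "linear (f1 (p + s *\<^sub>R u + t *\<^sub>R v))" "linear (f1 (p + s *\<^sub>R u))"
      using d1 q1 q2 has_derivative_linear by auto
    have g1: "((\<lambda>s. p + s *\<^sub>R u + t *\<^sub>R v) has_derivative (\<lambda>h. h *\<^sub>R u)) (at s)"
      by (intro derivative_eq_intros) auto
    have g2: "((\<lambda>s. p + s *\<^sub>R u) has_derivative (\<lambda>h. h *\<^sub>R u)) (at s)"
      by (intro derivative_eq_intros) auto
    have a: "((\<lambda>s. f (p + s *\<^sub>R u + t *\<^sub>R v)) has_derivative (\<lambda>h. f1 (p + s *\<^sub>R u + t *\<^sub>R v) (h *\<^sub>R u))) (at s)"
      using diff_chain_at[OF g1 d1[OF q1]] by (simp add: o_def)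
    have b: "((\<lambda>s. f (p + s *\<^sub>R u)) has_derivative (\<lambda>h. f1 (p + s *\<^sub>R u) (h *\<^sub>R u))) (at s)"
      using diff_chain_at[OF g2 d1[OF q2]] by (simp add: o_def)
    show ?thesis unfolding \<phi>_def
      using has_derivative_diff[OF a b] l1
      by (simp add: linear_scale algebra_simps)
  qed
  obtain s where s: "0 < s" "s < t" "\<phi> t - \<phi> 0 = (t - 0) * (f1 (p + s *\<^sub>R u + t *\<^sub>R v) u - f1 (p + s *\<^sub>R u) u)"
  proof (rule mvt[OF t(1), of \<phi>])
    show "continuous_on {0..t} \<phi>"
      proof (intro continuous_at_imp_continuous_on ballI)
      fix x :: real assume "x \<in> {0..t}"
      then show "isCont \<phi> x" using dphi[of x] has_derivative_continuous by auto
    qed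
    show "\<And>x. 0 < x \<Longrightarrow> x < t \<Longrightarrow> (\<phi> has_derivative (\<lambda>h. h * (f1 (p + x *\<^sub>R u + t *\<^sub>R v) u - f1 (p + x *\<^sub>R u) u))) (at x)"
      using dphi by auto
  qed auto
  define \<psi> where "\<psi> r = f1 (p + s *\<^sub>R u + r *\<^sub>R v) u" for r
  have dpsi: "(\<psi> has_derivative (\<lambda>h. h * f2 (p + s *\<^sub>R u + r *\<^sub>R v) u v)) (at r)"
    if "0 \<le> r" "r \<le> t" for r
  proof -
    have q: "p + s *\<^sub>R u + r *\<^sub>R v \<in> S" using inS s that by auto
    have l1: "linear (f2 (p + s *\<^sub>R u + r *\<^sub>R v) u)"
      using d2[OF q] has_derivative_linear by auto
    have g3: "((\<lambda>r. p + s *\<^sub>R u + r *\<^sub>R v) has_derivative (\<lambda>h. h *\<^sub>R v)) (at r)"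
      by (intro derivative_eq_intros) auto
    have a: "(\<psi> has_derivative (\<lambda>h. f2 (p + s *\<^sub>R u + r *\<^sub>R v) u (h *\<^sub>R v))) (at r)"
      unfolding \<psi>_def using diff_chain_at[OF g3 d2[OF q, of u]] by (simp add: o_def)
    show ?thesis using a l1 by (simp add: linear_scale)
  qed
  obtain r where r: "0 < r" "r < t" "\<psi> t - \<psi> 0 = (t - 0) * f2 (p + s *\<^sub>R u + r *\<^sub>R v) u v"
  proof (rule mvt[OF t(1), of \<psi>])
    show "continuous_on {0..t} \<psi>"
      proof (intro continuous_at_imp_continuous_on ballI)
      fix x :: real assume "x \<in> {0..t}"
      then show "isCont \<psi> x" using dpsi[of x] has_derivative_continuous by auto
    qed
    show "\<And>x. 0 < x \<Longrightarrow> x < t \<Longrightarrow> (\<psi> has_derivative (\<lambda>h. h * f2 (p + s *\<^sub>R u + x *\<^sub>R v) u v)) (at x)"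
      using dpsi by auto
  qed auto
  have "dist p (p + s *\<^sub>R u + r *\<^sub>R v) \<le> t * (norm u + norm v)"
  proof -
    have "norm (s *\<^sub>R u + r *\<^sub>R v) \<le> s * norm u + r * norm v"
      using norm_triangle_ineq[of "s *\<^sub>R u" "r *\<^sub>R v"] s r by simp
    also have "\<dots> \<le> t * norm u + t * norm v"
      using s r by (intro add_mono mult_right_mono) auto
    finally show ?thesis
      using dist_aux[of p "s *\<^sub>R u" "r *\<^sub>R v"] by (simp add: algebra_simps)
  qed
  moreover have "f (p + t *\<^sub>R u + t *\<^sub>R v) - f (p + t *\<^sub>R u) - f (p + t *\<^sub>R v) + f p = \<phi> t - \<phi> 0"
    unfolding \<phi>_def by simp
  moreover have "\<psi> t - \<psi> 0 = f1 (p + s *\<^sub>R u + t *\<^sub>R v) u - f1 (p + s *\<^sub>R u) u"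
    unfolding \<psi>_def by simp
  ultimately show ?thesis using s(3) r(3) by auto
qed

lemma schwarz:
  fixes f :: "'a::real_normed_vector \<Rightarrow> real"
  assumes S: "open S" "p \<in> S"
    and d1: "\<And>q. q \<in> S \<Longrightarrow> (f has_derivative f1 q) (at q)"
    and d2: "\<And>q w. q \<in> S \<Longrightarrow> ((\<lambda>q. f1 q w) has_derivative f2 q w) (at q)"
    and c2: "\<And>w z. continuous_on S (\<lambda>q. f2 q w z)"
  shows "f2 p u v = f2 p v u"
proof (rule ccontr)
  assume ne: "f2 p u v \<noteq> f2 p v u"
  define e where "e = \<bar>f2 p u v - f2 p v u\<bar> / 2"
  have e: "e > 0" using ne unfolding e_def by auto
  obtain d0 where d0: "d0 > 0" "ball p d0 \<subseteq> S" using S open_contains_ball by blast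
  have ic: "isCont (\<lambda>q. f2 q w z) p" for w z
    using c2[of w z] S continuous_on_eq_continuous_at by blast
  obtain da where da: "da > 0" "\<And>q. dist q p < da \<Longrightarrow> dist (f2 q u v) (f2 p u v) < e"
    using ic[of u v] e unfolding continuous_at_eps_delta by blast
  obtain db where db: "db > 0" "\<And>q. dist q p < db \<Longrightarrow> dist (f2 q v u) (f2 p v u) < e"
    using ic[of v u] e unfolding continuous_at_eps_delta by blast
  define d where "d = min d0 (min da db)"
  have d: "d > 0" "d \<le> d0" "d \<le> da" "d \<le> db" using d0 da db unfolding d_def by auto
  define N where "N = norm u + norm v + 1"
  have N: "N > 0" "norm u + norm v < N" unfolding N_def using norm_ge_zero[of u] norm_ge_zero[of v] by linarith+
  define t where "t = d / (2 * N)"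
  have t: "t > 0" using d N unfolding t_def by auto
  have tN: "t * (norm u + norm v) < d"
  proof -
    have "t * (norm u + norm v) \<le> t * N" using t N by (intro mult_left_mono) auto
    also have "t * N = d / 2" unfolding t_def using N by auto
    finally show ?thesis using d by auto
  qed
  have tv: "t * (norm v + norm u) < d" using tN by (simp add: add.commute)
  have sub: "cball p (t * (norm u + norm v)) \<subseteq> S"
    using tN d d0 by (auto simp: subset_iff)
  have sub2: "cball p (t * (norm v + norm u)) \<subseteq> S"
    using tv d d0 by (auto simp: subset_iff)
  obtain c1 where c1: "dist p c1 \<le> t * (norm u + norm v)"
    "f (p + t *\<^sub>R u + t *\<^sub>R v) - f (p + t *\<^sub>R u) - f (p + t *\<^sub>R v) + f p = t * (t * f2 c1 u v)"
    using schwarz_aux[OF S d1 d2 t sub] by blast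
  obtain c2 where c2: "dist p c2 \<le> t * (norm v + norm u)"
    "f (p + t *\<^sub>R v + t *\<^sub>R u) - f (p + t *\<^sub>R v) - f (p + t *\<^sub>R u) + f p = t * (t * f2 c2 v u)"
    using schwarz_aux[OF S d1 d2 t sub2] by blast
  have E: "p + t *\<^sub>R v + t *\<^sub>R u = p + t *\<^sub>R u + t *\<^sub>R v" by (simp add: algebra_simps)
  have "t * (t * f2 c1 u v) = t * (t * f2 c2 v u)" using c1(2) c2(2)[unfolded E] by linarith
  then have eq: "f2 c1 u v = f2 c2 v u" using t by simp
  have "dist c1 p < da" using c1(1) tN d by (simp add: dist_commute)
  then have A: "\<bar>f2 c1 u v - f2 p u v\<bar> < e" using da(2) by (simp add: dist_real_def)
  have "dist c2 p < db" using c2(1) tv d by (simp add: dist_commute)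
  then have B: "\<bar>f2 c2 v u - f2 p v u\<bar> < e" using db(2) by (simp add: dist_real_def)
  show False using A B eq e_def by (auto simp: abs_if split: if_splits)
qed

lemma smooth_C2:
  assumes "smooth_on U f" "open U" "q \<in> U"
  shows "f differentiable (at q)"
    "(\<lambda>q. frechet_derivative f (at q) v) differentiable (at q)"
    "continuous_on U (\<lambda>q. frechet_derivative (\<lambda>q. frechet_derivative f (at q) v) (at q) w)"
proof -
  have "Ck 2 U f" using assms(1) unfolding smooth_on_def by blast
  then have h: "f differentiable_on U" "(\<lambda>q. frechet_derivative f (at q) v) differentiable_on U"
     "continuous_on U (\<lambda>q. frechet_derivative (\<lambda>q. frechet_derivative f (at q) v) (at q) w)"
    by (simp_all add: numeral_2_eq_2)
  show "f differentiable (at q)" "(\<lambda>q. frechet_derivative f (at q) v) differentiable (at q)"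
    using h(1,2) differentiable_on_eq_differentiable_at[OF assms(2)] assms(3) by blast+
  show "continuous_on U (\<lambda>q. frechet_derivative (\<lambda>q. frechet_derivative f (at q) v) (at q) w)"
    by (rule h(3))
qed

lemma bl_mv: "bounded_linear (\<lambda>M::real^'n^'m. M *v b)"
proof -
  have "linear (\<lambda>M::real^'n^'m. M *v b)"
    by (rule linearI) (simp_all add: matrix_vector_mult_add_rdistrib scaleR_matrix_vector_assoc)
  then show ?thesis using linear_conv_bounded_linear by blast
qed

lemma bl_dot_mv: "bounded_linear (\<lambda>M::real^'n^'m. a \<bullet> (M *v b))"
  by (rule bounded_linear_compose[OF bounded_linear_inner_right[of a] bl_mv[of b]])

lemma bl_entry: "bounded_linear (\<lambda>M::real^'n^'m. M $ i $ j)"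
  by (rule bounded_linear_compose[OF bounded_linear_vec_nth[of j] bounded_linear_vec_nth[of i]])

lemma diff_vec:
  assumes "\<And>k. (\<lambda>r. h k r) differentiable (at q)"
  shows "(\<lambda>r. (\<chi> k. h k r)::real^'n) differentiable (at q)"
proof -
  have "\<forall>i\<in>Basis. (\<lambda>r. (\<chi> k. h k r) \<bullet> i) differentiable (at q)"
  proof
    fix i :: "real^'n" assume "i \<in> Basis"
    then obtain k where k: "i = axis k 1" by (auto simp: Basis_vec_def)
    have "(\<lambda>r. (\<chi> k. h k r) \<bullet> i) = h k" unfolding k by (simp add: inner_axis)
    then show "(\<lambda>r. (\<chi> k. h k r) \<bullet> i) differentiable (at q)" using assms by simp
  qed
  then show ?thesis using differentiable_componentwise_within by blast
qed

lemma diff_prod: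
  fixes f :: "'i \<Rightarrow> 'a::real_normed_vector \<Rightarrow> real"
  assumes "\<And>i. i \<in> I \<Longrightarrow> f i differentiable (at q)"
  shows "(\<lambda>r. \<Prod>i\<in>I. f i r) differentiable (at q)"
proof -
  have "((\<lambda>r. \<Prod>i\<in>I. f i r) has_derivative
     (\<lambda>y. \<Sum>i\<in>I. frechet_derivative (f i) (at q) y * (\<Prod>j\<in>I - {i}. f j q))) (at q)"
    by (rule has_derivative_prod) (use fd_works assms in blast)
  then show ?thesis unfolding differentiable_def by blast
qed

lemma diff_det:
  fixes M :: "'a::real_normed_vector \<Rightarrow> real^'n^'n"
  assumes "\<And>i j. (\<lambda>r. M r $ i $ j) differentiable (at q)"
  shows "(\<lambda>r. det (M r)) differentiable (at q)"
  unfolding det_def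
proof (rule differentiable_sum)
  show "finite {p. p permutes (UNIV::'n set)}" by (simp add: finite_permutations)
  show "\<forall>a\<in>{p. p permutes (UNIV::'n set)}. (\<lambda>r. of_int (sign a) * (\<Prod>i\<in>UNIV. M r $ i $ a i)) differentiable (at q)"
  proof
    fix a :: "'n \<Rightarrow> 'n"
    have "(\<lambda>r. \<Prod>i\<in>UNIV. M r $ i $ a i) differentiable (at q)"
      by (rule diff_prod) (rule assms)
    then show "(\<lambda>r. of_int (sign a) * (\<Prod>i\<in>UNIV. M r $ i $ a i)) differentiable (at q)"
      by (intro differentiable_mult differentiable_const)
  qed
qed

lemma matrix_inv_right':
  assumes "invertible (A::real^'n^'n)"
  shows "A ** matrix_inv A = mat 1"
proof -
  have "\<exists>A'. A ** A' = mat 1 \<and> A' ** A = mat 1" using assms unfolding invertible_def by blast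
  then have "A ** matrix_inv A = mat 1 \<and> matrix_inv A ** A = mat 1"
    unfolding matrix_inv_def by (rule someI_ex)
  then show ?thesis by blast
qed

locale sas =
  fixes U :: "(real^'n) set" and G Phi :: "real^'n \<Rightarrow> real^'n^'n"
    and xi eta :: "real^'n \<Rightarrow> real^'n"
  assumes sas: "sasakian_on U G Phi xi eta"
begin

lemma openU: "open U" and Gsm: "smooth_on U G" and Phism: "smooth_on U Phi" and xism: "smooth_on U xi"
  using sas unfolding sasakian_on_def contact_metric_on_def almost_contact_metric_on_def
    riemannian_metric_on_def by auto

lemma Gsym: "q \<in> U \<Longrightarrow> transpose (G q) = G q"
  and Gpos: "q \<in> U \<Longrightarrow> v \<noteq> 0 \<Longrightarrow> gm G q v v > 0"
  and etaxi: "q \<in> U \<Longrightarrow> eta q \<bullet> xi q = 1"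
  and phi2: "q \<in> U \<Longrightarrow> Phi q *v (Phi q *v v) = - v + (eta q \<bullet> v) *\<^sub>R xi q"
  and phig: "q \<in> U \<Longrightarrow> gm G q (Phi q *v u) (Phi q *v v) = gm G q u v - (eta q \<bullet> u) * (eta q \<bullet> v)"
  and sasak: "q \<in> U \<Longrightarrow> nabla_phi G Phi q u v = gm G q u v *\<^sub>R xi q - (eta q \<bullet> v) *\<^sub>R u"
  using sas unfolding sasakian_on_def contact_metric_on_def almost_contact_metric_on_def
    riemannian_metric_on_def by auto

lemma gm_add1: "gm G q (a + b) c = gm G q a c + gm G q b c"
  and gm_add2: "gm G q a (b + c) = gm G q a b + gm G q a c"
  and gm_diff1: "gm G q (a - b) c = gm G q a c - gm G q b c"
  and gm_diff2: "gm G q a (b - c) = gm G q a b - gm G q a c"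
  and gm_scale1: "gm G q (s *\<^sub>R a) c = s * gm G q a c"
  and gm_scale2: "gm G q a (s *\<^sub>R c) = s * gm G q a c"
  and gm_neg1: "gm G q (- a) c = - gm G q a c"
  and gm_zero1: "gm G q 0 c = 0"
  and gm_zero2: "gm G q a 0 = 0"
  unfolding gm_def
  by (simp_all add: inner_add_left inner_add_right matrix_vector_right_distrib
      matrix_vector_mult_diff_distrib inner_diff_left inner_diff_right matrix_vector_mult_scaleR)

lemmas gm_simps = gm_add1 gm_add2 gm_diff1 gm_diff2 gm_scale1 gm_scale2 gm_neg1 gm_zero1 gm_zero2

lemma gm_sym: assumes "q \<in> U" shows "gm G q a b = gm G q b a"
proof -
  have "a v* G q = G q *v a" using vector_transpose_matrix[of a "G q"] Gsym[OF assms] by simp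
  then show ?thesis unfolding gm_def by (metis dot_lmul_matrix inner_commute)
qed

lemma gm_inj:
  assumes "q \<in> U" "\<And>w. gm G q x w = gm G q y w"
  shows "x = y"
proof (rule ccontr)
  assume "x \<noteq> y"
  then have "gm G q (x - y) (x - y) > 0" using Gpos[OF assms(1)] by simp
  moreover have "gm G q (x - y) (x - y) = 0" using assms(2)[of "x - y"] by (simp add: gm_diff1)
  ultimately show False by simp
qed

lemma G_inv: assumes "q \<in> U" shows "invertible (G q)"
proof -
  have "\<forall>x. G q *v x = 0 \<longrightarrow> x = 0"
  proof (intro allI impI)
    fix x assume "G q *v x = 0"
    then have "gm G q x x = 0" unfolding gm_def by simp
    then show "x = 0" using Gpos[OF assms, of x] by (cases "x = 0") auto
  qed
  then obtain B where "B ** G q = mat 1" using matrix_left_invertible_ker by blast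
  then have "G q ** B = mat 1" using matrix_left_right_inverse by blast
  with \<open>B ** G q = mat 1\<close> show ?thesis unfolding invertible_def by blast
qed

lemma G_Minv: "q \<in> U \<Longrightarrow> G q *v (matrix_inv (G q) *v y) = y"
  using matrix_inv_right'[OF G_inv] by (simp add: matrix_vector_mul_assoc)

lemma det_G: "q \<in> U \<Longrightarrow> det (G q) \<noteq> 0"
  using G_inv invertible_det_nz by blast

abbreviation DG where "DG q w \<equiv> frechet_derivative G (at q) w"

lemma G_diff: "q \<in> U \<Longrightarrow> G differentiable (at q)"
  and DG_diff: "q \<in> U \<Longrightarrow> (\<lambda>r. DG r w) differentiable (at q)"
  using smooth_C2[OF Gsm openU] by blast+

lemma DG2_cont: "continuous_on U (\<lambda>q. frechet_derivative (\<lambda>r. DG r w) (at q) z)"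
proof (cases "U = {}")
  case False
  then obtain q where "q \<in> U" by blast
  then show ?thesis using smooth_C2(3)[OF Gsm openU] by blast
qed simp

lemma DG_add: "q \<in> U \<Longrightarrow> DG q (a + b) = DG q a + DG q b"
  and DG_scale: "q \<in> U \<Longrightarrow> DG q (c *\<^sub>R a) = c *\<^sub>R DG q a"
  using fd_linear[OF G_diff] linear_add linear_scale by blast+

lemma dgm_eq: "dgm G q w a b = a \<bullet> (DG q w *v b)"
  unfolding dgm_def ..

lemma dgm_sym: assumes "q \<in> U" shows "dgm G q w a b = dgm G q w b a"
proof -
  have e1: "frechet_derivative (\<lambda>r. a \<bullet> (G r *v b)) (at q) w = a \<bullet> (DG q w *v b)"
    using fd_blin(2)[OF bl_dot_mv G_diff[OF assms]] .
  have e2: "frechet_derivative (\<lambda>r. b \<bullet> (G r *v a)) (at q) w = b \<bullet> (DG q w *v a)"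
    using fd_blin(2)[OF bl_dot_mv G_diff[OF assms]] .
  have "frechet_derivative (\<lambda>r. a \<bullet> (G r *v b)) (at q) = frechet_derivative (\<lambda>r. b \<bullet> (G r *v a)) (at q)"
    by (rule fd_open_eq(2)[OF openU assms _ fd_blin(1)[OF bl_dot_mv G_diff[OF assms]]])
       (use gm_sym in \<open>auto simp: gm_def\<close>)
  then show ?thesis using e1 e2 unfolding dgm_def by metis
qed

lemma dgm_add1: "dgm G q w (a + a') b = dgm G q w a b + dgm G q w a' b"
  and dgm_add2: "dgm G q w a (b + b') = dgm G q w a b + dgm G q w a b'"
  and dgm_scale1: "dgm G q w (c *\<^sub>R a) b = c * dgm G q w a b"
  and dgm_scale2: "dgm G q w a (c *\<^sub>R b) = c * dgm G q w a b"
  unfolding dgm_def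
  by (simp_all add: inner_add_left inner_add_right matrix_vector_right_distrib matrix_vector_mult_scaleR)

lemma dgm_add0: "q \<in> U \<Longrightarrow> dgm G q (w + w') a b = dgm G q w a b + dgm G q w' a b"
  and dgm_scale0: "q \<in> U \<Longrightarrow> dgm G q (c *\<^sub>R w) a b = c * dgm G q w a b"
  unfolding dgm_def
  by (simp_all add: DG_add DG_scale matrix_vector_mult_add_rdistrib inner_add_right
      scaleR_matrix_vector_assoc[symmetric])

end

lemma lin_aux: "2 * (a + b) = c \<Longrightarrow> b + a = c / (2::real)"
  by simp

context sas
begin

abbreviation Gam where "Gam q u v \<equiv> Christoffel G q u v"

definition cv where
  "cv q u v = (\<chi> k. (dgm G q u v (axis k 1) + dgm G q v u (axis k 1) - dgm G q (axis k 1) u v) / 2)"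

lemma Gam_cv: "Gam q u v = matrix_inv (G q) *v cv q u v"
  unfolding Christoffel_def cv_def ..

lemma gm_Gam:
  assumes q: "q \<in> U"
  shows "gm G q (Gam q u v) w = (dgm G q u v w + dgm G q v u w - dgm G q w u v) / 2"
proof -
  define L where "L y = (dgm G q u v y + dgm G q v u y - dgm G q y u v) / 2" for y
  have lin: "linear L" unfolding L_def
    by (rule linearI) (simp_all add: dgm_add2 dgm_add0[OF q] dgm_scale2 dgm_scale0[OF q] field_simps)
  have c: "G q *v Gam q u v = (\<chi> k. L (axis k 1))"
    unfolding Gam_cv G_Minv[OF q] cv_def L_def ..
  have w: "w = (\<Sum>k\<in>UNIV. w$k *\<^sub>R axis k 1)"
    using basis_expansion[of w] by (simp add: scalar_mult_eq_scaleR)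
  have Lw: "L w = (\<Sum>k\<in>UNIV. w$k * L (axis k 1))"
    by (subst w) (simp add: linear_sum[OF lin] linear_scale[OF lin] o_def)
  have "gm G q (Gam q u v) w = w \<bullet> (G q *v Gam q u v)"
    using gm_sym[OF q] unfolding gm_def by metis
  also have "\<dots> = (\<Sum>k\<in>UNIV. w$k * L (axis k 1))"
    unfolding c inner_vec_def by simp
  also have "\<dots> = L w" using Lw by simp
  finally show ?thesis unfolding L_def .
qed

lemma Gam_sym: assumes q: "q \<in> U" shows "Gam q u v = Gam q v u"
  by (rule gm_inj[OF q]) (simp add: gm_Gam[OF q] dgm_sym[OF q, of _ u v])

lemma Gam_add2: assumes q: "q \<in> U" shows "Gam q u (v + v') = Gam q u v + Gam q u v'"
  by (rule gm_inj[OF q]) (simp add: gm_add1 gm_Gam[OF q] dgm_add1 dgm_add2 dgm_add0[OF q] field_simps)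

lemma Gam_scale2: assumes q: "q \<in> U" shows "Gam q u (c *\<^sub>R v) = c *\<^sub>R Gam q u v"
  by (rule gm_inj[OF q]) (simp add: gm_scale1 gm_Gam[OF q] dgm_scale1 dgm_scale2 dgm_scale0[OF q] algebra_simps)

lemma Gam_add1: assumes q: "q \<in> U" shows "Gam q (u + u') v = Gam q u v + Gam q u' v"
  using Gam_add2[OF q] Gam_sym[OF q] by metis

lemma Gam_scale1: assumes q: "q \<in> U" shows "Gam q (c *\<^sub>R u) v = c *\<^sub>R Gam q u v"
  using Gam_scale2[OF q] Gam_sym[OF q] by metis

lemma compat: assumes q: "q \<in> U"
  shows "gm G q (Gam q u a) b + gm G q (Gam q u b) a = dgm G q u a b"
  using dgm_sym[OF q, of u a b] dgm_sym[OF q, of a u b] dgm_sym[OF q, of b u a]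
  by (simp add: gm_Gam[OF q] field_simps)

lemma cv_diff: assumes q: "q \<in> U" shows "(\<lambda>r. cv r u v $ i) differentiable (at q)"
proof -
  have d: "(\<lambda>r. dgm G r w a b) differentiable (at q)" for w a b
    unfolding dgm_def by (rule fd_blin(1)[OF bl_dot_mv DG_diff[OF q]])
  show ?thesis unfolding cv_def
    by (simp, intro differentiable_divide differentiable_add differentiable_diff d differentiable_const) simp
qed

lemma Gam_diff: assumes q: "q \<in> U" shows "(\<lambda>r. Gam r u v) differentiable (at q)"
proof -
  define F where "F r = (\<chi> k. det (\<chi> i j. if j = k then cv r u v $ i else G r $ i $ j) / det (G r))" for r
  have ge: "(\<lambda>r. G r $ i $ j) differentiable (at q)" for i j
    by (rule fd_blin(1)[OF bl_entry G_diff[OF q]])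
  have Fd: "F differentiable (at q)"
    unfolding F_def
  proof (rule diff_vec)
    fix k
    have "(\<lambda>r. det (\<chi> i j. if j = k then cv r u v $ i else G r $ i $ j)) differentiable (at q)"
    proof (rule diff_det)
      fix i j
      show "(\<lambda>r. (\<chi> i j. if j = k then cv r u v $ i else G r $ i $ j) $ i $ j) differentiable (at q)"
        by (cases "j = k") (simp_all add: cv_diff[OF q] ge)
    qed
    moreover have "(\<lambda>r. det (G r)) differentiable (at q)" by (rule diff_det) (rule ge)
    ultimately show "(\<lambda>r. det (\<chi> i j. if j = k then cv r u v $ i else G r $ i $ j) / det (G r)) differentiable (at q)"
      using det_G[OF q] by (intro differentiable_divide) auto
  qed
  have eq: "F r = Gam r u v" if r: "r \<in> U" for r
  proof -
    have h: "G r *v Gam r u v = cv r u v" unfolding Gam_cv G_Minv[OF r] ..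
    have "Gam r u v = (\<chi> k. det (\<chi> i j. if j = k then cv r u v $ i else G r $ i $ j) / det (G r))"
      using iffD1[OF cramer[OF det_G[OF r]] h] .
    then show ?thesis unfolding F_def by (rule sym)
  qed
  show ?thesis by (rule fd_open_eq(1)[OF openU q eq Fd])
qed

abbreviation DGam where "DGam p z u v \<equiv> frechet_derivative (\<lambda>r. Gam r u v) (at p) z"
abbreviation hh where "hh p z a b c \<equiv> b \<bullet> (frechet_derivative (\<lambda>r. DG r a) (at p) z *v c)"

lemma DGam_id:
  assumes p: "p \<in> U"
  shows "gm G p (DGam p z u v) w + dgm G p z (Gam p u v) w = (hh p z u v w + hh p z v u w - hh p z w u v) / 2"
proof -
  define F1 where "F1 r = 2 * (Gam r u v \<bullet> (G r *v w))" for r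
  define F2 where "F2 r = v \<bullet> (DG r u *v w) + u \<bullet> (DG r v *v w) - u \<bullet> (DG r w *v v)" for r
  have d1: "(F1 has_derivative (\<lambda>h. 2 * (Gam p u v \<bullet> (DG p h *v w) + DGam p h u v \<bullet> (G p *v w)))) (at p)"
    unfolding F1_def
    by (rule has_derivative_mult_right[OF has_derivative_inner[OF fd_works[OF Gam_diff[OF p]]
          bounded_linear.has_derivative[OF bl_mv fd_works[OF G_diff[OF p]]]]])
  have A: "((\<lambda>r. a \<bullet> (DG r x *v b)) has_derivative (\<lambda>h. hh p h x a b)) (at p)" for a b x
    by (rule bounded_linear.has_derivative[OF bl_dot_mv fd_works[OF DG_diff[OF p]]])
  have d2: "(F2 has_derivative (\<lambda>h. hh p h u v w + hh p h v u w - hh p h w u v)) (at p)"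
    unfolding F2_def by (intro has_derivative_diff has_derivative_add A)
  have eq: "F2 r = F1 r" if r: "r \<in> U" for r
    using gm_Gam[OF r, of u v w] unfolding F1_def F2_def gm_def dgm_def by simp
  have d2': "(F1 has_derivative (\<lambda>h. hh p h u v w + hh p h v u w - hh p h w u v)) (at p)"
    by (rule has_derivative_transform_within_open[OF d2 openU p eq])
  have E: "(\<lambda>h. 2 * (Gam p u v \<bullet> (DG p h *v w) + DGam p h u v \<bullet> (G p *v w))) =
        (\<lambda>h. hh p h u v w + hh p h v u w - hh p h w u v)"
    by (rule has_derivative_unique[OF d1 d2'])
  have "2 * (Gam p u v \<bullet> (DG p z *v w) + DGam p z u v \<bullet> (G p *v w)) = hh p z u v w + hh p z v u w - hh p z w u v"
    using fun_cong[OF E, of z] by (simp only:)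
  then show ?thesis unfolding gm_def dgm_def by (rule lin_aux)
qed

lemma hh_sym:
  assumes p: "p \<in> U"
  shows "hh p z u a b = hh p u z a b"
proof -
  have "a \<bullet> (frechet_derivative (\<lambda>r. DG r u) (at p) z *v b) = a \<bullet> (frechet_derivative (\<lambda>r. DG r z) (at p) u *v b)"
  proof (rule schwarz[OF openU p, of "\<lambda>r. a \<bullet> (G r *v b)" "\<lambda>r w. a \<bullet> (DG r w *v b)"
        "\<lambda>r w z. a \<bullet> (frechet_derivative (\<lambda>r. DG r w) (at r) z *v b)"])
    show "((\<lambda>r. a \<bullet> (G r *v b)) has_derivative (\<lambda>w. a \<bullet> (DG q w *v b))) (at q)" if "q \<in> U" for q
      by (rule bounded_linear.has_derivative[OF bl_dot_mv fd_works[OF G_diff[OF that]]])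
    show "((\<lambda>r. a \<bullet> (DG r w *v b)) has_derivative (\<lambda>z. a \<bullet> (frechet_derivative (\<lambda>r. DG r w) (at q) z *v b))) (at q)"
      if "q \<in> U" for q w
      by (rule bounded_linear.has_derivative[OF bl_dot_mv fd_works[OF DG_diff[OF that]]])
    show "continuous_on U (\<lambda>q. a \<bullet> (frechet_derivative (\<lambda>r. DG r w) (at q) z *v b))" for w z
      by (rule bounded_linear.continuous_on[OF bl_dot_mv DG2_cont])
  qed
  then show ?thesis by simp
qed

lemma DGam_sym: assumes p: "p \<in> U" shows "DGam p z u v = DGam p z v u"
proof -
  have "frechet_derivative (\<lambda>r. Gam r v u) (at p) = frechet_derivative (\<lambda>r. Gam r u v) (at p)"
    by (rule fd_open_eq(2)[OF openU p _ Gam_diff[OF p]]) (rule Gam_sym)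
  then show ?thesis by simp
qed

lemma DGam_add2: assumes p: "p \<in> U" shows "DGam p z u (v + v') = DGam p z u v + DGam p z u v'"
proof -
  have "frechet_derivative (\<lambda>r. Gam r u (v + v')) (at p) = frechet_derivative (\<lambda>r. Gam r u v + Gam r u v') (at p)"
    by (rule fd_open_eq(2)[OF openU p _ fd_add(1)[OF Gam_diff[OF p] Gam_diff[OF p]]]) (rule Gam_add2[symmetric])
  then show ?thesis using fd_add(2)[OF Gam_diff[OF p] Gam_diff[OF p]] by simp
qed

lemma DGam_scale2: assumes p: "p \<in> U" shows "DGam p z u (c *\<^sub>R v) = c *\<^sub>R DGam p z u v"
proof -
  have "frechet_derivative (\<lambda>r. Gam r u (c *\<^sub>R v)) (at p) = frechet_derivative (\<lambda>r. c *\<^sub>R Gam r u v) (at p)"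
    by (rule fd_open_eq(2)[OF openU p _ fd_scale(1)[OF Gam_diff[OF p]]]) (rule Gam_scale2[symmetric])
  then show ?thesis using fd_scale(2)[OF Gam_diff[OF p]] by simp
qed

lemma DGam_add1: assumes p: "p \<in> U" shows "DGam p z (u + u') v = DGam p z u v + DGam p z u' v"
  using DGam_add2[OF p] DGam_sym[OF p] by metis

lemma DGam_scale1: assumes p: "p \<in> U" shows "DGam p z (c *\<^sub>R u) v = c *\<^sub>R DGam p z u v"
  using DGam_scale2[OF p] DGam_sym[OF p] by metis

lemma DGam_add0: assumes p: "p \<in> U" shows "DGam p (z + z') u v = DGam p z u v + DGam p z' u v"
  using fd_linear[OF Gam_diff[OF p]] linear_add by blast

lemma DGam_scale0: assumes p: "p \<in> U" shows "DGam p (c *\<^sub>R z) u v = c *\<^sub>R DGam p z u v"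
  using fd_linear[OF Gam_diff[OF p]] linear_scale by blast

end

context sas
begin

lemma nabla_const: "nabla G v (\<lambda>r. w) q = Gam q v w"
  unfolding nabla_def by simp

lemma curv_eq: "curv G p u v w = DGam p u v w + Gam p u (Gam p v w) - DGam p v u w - Gam p v (Gam p u w)"
  unfolding curv_def nabla_const by (simp add: nabla_def diff_diff_eq)

lemma curv_anti: "curv G p u v w = - curv G p v u w"
  unfolding curv_eq by (simp add: algebra_simps)

lemma S1: assumes p: "p \<in> U"
  shows "gm G p (curv G p u v w) z + gm G p (curv G p u v z) w = 0"
proof -
  note I = DGam_id[OF p]
  note C = compat[OF p]
  have H1: "hh p u v w z = hh p v u w z" and H2: "hh p u v z w = hh p v u z w"
    using hh_sym[OF p] by blast+
  have S: "gm G p (Gam p u z) (Gam p v w) = gm G p (Gam p v w) (Gam p u z)"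
    "gm G p (Gam p u w) (Gam p v z) = gm G p (Gam p v z) (Gam p u w)"
    using gm_sym[OF p] by blast+
  show ?thesis
    unfolding curv_eq gm_simps
    using I[of v w u z] I[of v z u w] I[of u w v z] I[of u z v w]
      C[of u "Gam p v w" z] C[of u "Gam p v z" w] C[of v "Gam p u w" z] C[of v "Gam p u z" w]
      H1 H2 S by argo
qed

lemma Bianchi: assumes p: "p \<in> U"
  shows "curv G p u v w + curv G p v w u + curv G p w u v = 0"
proof -
  have e: "DGam p v w u = DGam p v u w" "DGam p w v u = DGam p w u v" "DGam p u w v = DGam p u v w"
    "Gam p w u = Gam p u w" "Gam p v u = Gam p u v" "Gam p w v = Gam p v w"
    using DGam_sym[OF p] Gam_sym[OF p] by blast+
  show ?thesis unfolding curv_eq e by (simp add: algebra_simps)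
qed

definition Q where "Q p a b c d = gm G p (curv G p a b c) d"

lemma pair_sym: assumes p: "p \<in> U"
  shows "Q p a b c d = Q p c d a b"
proof -
  have Qa1: "Q p x y z w = - Q p y x z w" for x y z w
    unfolding Q_def using curv_anti[of p x y z] by (simp add: gm_neg1)
  have Qa2: "Q p x y z w = - Q p x y w z" for x y z w
    unfolding Q_def using S1[OF p, of x y z w] by linarith
  have Qb: "Q p x y z w + Q p y z x w + Q p z x y w = 0" for x y z w
  proof -
    have "gm G p (curv G p x y z + curv G p y z x + curv G p z x y) w = 0"
      unfolding Bianchi[OF p] by (simp add: gm_zero1)
    then show ?thesis unfolding Q_def gm_add1 .
  qed
  show ?thesis
    using Qb[of a b c d] Qb[of b c d a] Qb[of c d a b] Qb[of d a b c]
      Qa1[of a b c d] Qa2[of a b c d] Qa1[of a b d c] Qa1[of a b d c] Qa2[of a b d c] Qa1[of a b c d] Qa1[of a c d b] Qa2[of a c d b] Qa1[of a c b d] Qa1[of b c a d] Qa2[of b c a d] Qa1[of b c d a] Qa1[of b c d a] Qa2[of b c d a] Qa1[of b c a d] Qa1[of b d a c] Qa2[of b d a c] Qa1[of b d c a] Qa1[of c a b d] Qa2[of c a b d] Qa1[of c a d b] Qa1[of c d a b] Qa2[of c d a b] Qa1[of c d b a] Qa1[of c d b a] Qa2[of c d b a] Qa1[of c d a b] Qa1[of d a b c] Qa2[of d a b c] Qa1[of d a c b] Qa1[of d a c b] Qa2[of d a c b] Qa1[of d a b c] Qa1[of d b c a] Qa2[of d b c a] Qa1[of d b a c]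
    by linarith
qed

lemma curv_add3: assumes p: "p \<in> U" shows "curv G p u v (w + w') = curv G p u v w + curv G p u v w'"
  unfolding curv_eq by (simp add: DGam_add2[OF p] Gam_add2[OF p] algebra_simps)

lemma curv_scale3: assumes p: "p \<in> U" shows "curv G p u v (c *\<^sub>R w) = c *\<^sub>R curv G p u v w"
  unfolding curv_eq by (simp add: DGam_scale2[OF p] Gam_scale2[OF p] algebra_simps)

lemma curv_add2: assumes p: "p \<in> U" shows "curv G p u (v + v') w = curv G p u v w + curv G p u v' w"
  unfolding curv_eq by (simp add: DGam_add1[OF p] DGam_add0[OF p] Gam_add1[OF p] Gam_add2[OF p] algebra_simps)

lemma curv_scale2: assumes p: "p \<in> U" shows "curv G p u (c *\<^sub>R v) w = c *\<^sub>R curv G p u v w"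
  unfolding curv_eq by (simp add: DGam_scale1[OF p] DGam_scale0[OF p] Gam_scale1[OF p] Gam_scale2[OF p] algebra_simps)

lemma curv_scale1: assumes p: "p \<in> U" shows "curv G p (c *\<^sub>R u) v w = c *\<^sub>R curv G p u v w"
  using curv_scale2[OF p] curv_anti by (metis scaleR_minus_right)

end

lemma lin_rep:
  fixes f :: "'b::euclidean_space \<Rightarrow> 'c::real_normed_vector"
  assumes "linear f"
  shows "f c = (\<Sum>b\<in>Basis. (c \<bullet> b) *\<^sub>R f b)"
proof -
  have "f c = f (\<Sum>b\<in>Basis. (c \<bullet> b) *\<^sub>R b)" by (simp add: euclidean_representation)
  also have "\<dots> = (\<Sum>b\<in>Basis. (c \<bullet> b) *\<^sub>R f b)"
    by (simp add: linear_sum[OF assms] linear_scale[OF assms] o_def)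
  finally show ?thesis .
qed

lemma PR:
  fixes B :: "'a::real_normed_vector \<Rightarrow> 'b::euclidean_space \<Rightarrow> 'c::real_normed_vector"
  assumes S: "open S" "q \<in> S"
    and lin: "\<And>r. r \<in> S \<Longrightarrow> linear (B r)"
    and dB: "\<And>c. (\<lambda>r. B r c) differentiable (at q)"
    and dy: "y differentiable (at q)"
  shows "((\<lambda>r. B r (y r)) has_derivative
     (\<lambda>h. frechet_derivative (\<lambda>r. B r (y q)) (at q) h + B q (frechet_derivative y (at q) h))) (at q)"
proof -
  have d1: "((\<lambda>r. \<Sum>b\<in>Basis. (y r \<bullet> b) *\<^sub>R B r b) has_derivative
     (\<lambda>h. \<Sum>b\<in>Basis. (y q \<bullet> b) *\<^sub>R frechet_derivative (\<lambda>r. B r b) (at q) h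
            + (frechet_derivative y (at q) h \<bullet> b) *\<^sub>R B q b)) (at q)"
    by (intro has_derivative_sum has_derivative_scaleR has_derivative_inner_left fd_works dy dB)
  have d2: "((\<lambda>r. B r (y r)) has_derivative
     (\<lambda>h. \<Sum>b\<in>Basis. (y q \<bullet> b) *\<^sub>R frechet_derivative (\<lambda>r. B r b) (at q) h
            + (frechet_derivative y (at q) h \<bullet> b) *\<^sub>R B q b)) (at q)"
    by (rule has_derivative_transform_within_open[OF d1 S]) (use lin_rep lin in metis)
  have e1: "frechet_derivative (\<lambda>r. B r (y q)) (at q) h =
      (\<Sum>b\<in>Basis. (y q \<bullet> b) *\<^sub>R frechet_derivative (\<lambda>r. B r b) (at q) h)" for h
  proof -
    have dd: "(\<lambda>r. \<Sum>b\<in>Basis. (y q \<bullet> b) *\<^sub>R B r b) differentiable (at q)"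
      by (intro fd_sum(1) fd_scale(1) dB) simp
    have X: "frechet_derivative (\<lambda>r. B r (y q)) (at q) = frechet_derivative (\<lambda>r. \<Sum>b\<in>Basis. (y q \<bullet> b) *\<^sub>R B r b) (at q)"
      by (rule fd_open_eq(2)[OF S _ dd]) (use lin_rep lin in metis)
    have Y: "frechet_derivative (\<lambda>r. \<Sum>b\<in>Basis. (y q \<bullet> b) *\<^sub>R B r b) (at q) h = (\<Sum>b\<in>Basis. (y q \<bullet> b) *\<^sub>R frechet_derivative (\<lambda>r. B r b) (at q) h)"
      by (subst fd_sum(2)) (auto intro: fd_scale dB simp: fd_scale(2)[OF dB])
    show ?thesis unfolding X Y ..
  qed
  have e2: "B q c = (\<Sum>b\<in>Basis. (c \<bullet> b) *\<^sub>R B q b)" for c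
    using lin_rep[OF lin[OF S(2)]] .
  have E: "(\<lambda>h. \<Sum>b\<in>Basis. (y q \<bullet> b) *\<^sub>R frechet_derivative (\<lambda>r. B r b) (at q) h
            + (frechet_derivative y (at q) h \<bullet> b) *\<^sub>R B q b) =
     (\<lambda>h. frechet_derivative (\<lambda>r. B r (y q)) (at q) h + B q (frechet_derivative y (at q) h))"
    by (rule ext) (simp add: e1 e2[of "frechet_derivative y (at q) _"] sum.distrib)
  show ?thesis using d2 unfolding E .
qed

lemma aux_solve1: "a + (b + c) = - d \<Longrightarrow> b = - d - a - (c::'a::ab_group_add)"
proof -
  assume h: "a + (b + c) = - d"
  have "b = (a + (b + c)) - a - c" by (simp add: algebra_simps)
  also have "\<dots> = - d - a - c" using h by simp
  finally show ?thesis .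
qed

lemma aux_solve2: "a + b - c = d \<Longrightarrow> a = d - b + (c::'a::ab_group_add)"
proof -
  assume h: "a + b - c = d"
  have "a = (a + b - c) - b + c" by (simp add: algebra_simps)
  also have "\<dots> = d - b + c" using h by simp
  finally show ?thesis .
qed

lemma aux_solve3: "a - b = d \<Longrightarrow> b = a - (d::'a::ab_group_add)"
proof -
  assume h: "a - b = d"
  have "b = a - (a - b)" by (simp add: algebra_simps)
  then show ?thesis using h by simp
qed

lemma mv_neg: "(A::real^'n^'m) *v (- x) = - (A *v x)"
  using linear_neg[OF matrix_vector_mul_linear[of A]] by simp

context sas
begin

lemma Phi_diff: "q \<in> U \<Longrightarrow> Phi differentiable (at q)"
  using smooth_C2[OF Phism openU] by blast

lemma xi_diff: "q \<in> U \<Longrightarrow> xi differentiable (at q)"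
  and xi_diff2: "q \<in> U \<Longrightarrow> (\<lambda>r. frechet_derivative xi (at r) v) differentiable (at q)"
  using smooth_C2[OF xism openU] by blast+

lemma xi2_cont: "continuous_on U (\<lambda>q. frechet_derivative (\<lambda>r. frechet_derivative xi (at r) v) (at q) w)"
proof (cases "U = {}")
  case False
  then obtain q where "q \<in> U" by blast
  then show ?thesis using smooth_C2(3)[OF xism openU] by blast
qed simp

lemma phixi: assumes q: "q \<in> U" shows "Phi q *v xi q = 0"
proof -
  define y where "y = Phi q *v xi q"
  have a: "Phi q *v y = 0" unfolding y_def using phi2[OF q, of "xi q"] etaxi[OF q] by simp
  have "0 = - y + (eta q \<bullet> y) *\<^sub>R xi q" using phi2[OF q, of y] a by simp
  then have b: "y = (eta q \<bullet> y) *\<^sub>R xi q" by (metis add_minus_cancel add.right_neutral)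
  have "Phi q *v ((eta q \<bullet> y) *\<^sub>R xi q) = (eta q \<bullet> y) *\<^sub>R y"
    unfolding y_def by (simp add: matrix_vector_mult_scaleR)
  then have "(eta q \<bullet> y) *\<^sub>R y = 0" using a b by simp
  then have "y = 0" using b by auto
  then show ?thesis unfolding y_def .
qed

lemma gxixi: assumes q: "q \<in> U" shows "gm G q (xi q) (xi q) = 1"
  using phig[OF q, of "xi q" "xi q"] phixi[OF q] etaxi[OF q] by (simp add: gm_zero1)

lemma eta_g: assumes q: "q \<in> U" shows "eta q \<bullet> u = gm G q u (xi q)"
  using phig[OF q, of u "xi q"] phixi[OF q] etaxi[OF q] by (simp add: gm_zero2)

lemma xi_nz: assumes q: "q \<in> U" shows "xi q \<noteq> 0"
  using etaxi[OF q] by auto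

lemma eta_phi: assumes q: "q \<in> U" shows "eta q \<bullet> (Phi q *v v) = 0"
proof -
  have 1: "Phi q *v (Phi q *v (Phi q *v v)) = - (Phi q *v v) + (eta q \<bullet> (Phi q *v v)) *\<^sub>R xi q"
    by (rule phi2[OF q])
  have 2: "Phi q *v (Phi q *v (Phi q *v v)) = - (Phi q *v v)"
    unfolding phi2[OF q] by (simp add: matrix_vector_right_distrib matrix_vector_mult_diff_distrib matrix_vector_mult_scaleR mv_neg phixi[OF q])
  have "(eta q \<bullet> (Phi q *v v)) *\<^sub>R xi q = 0" using 1 2 by simp
  then show ?thesis using xi_nz[OF q] by simp
qed

lemma Gam_lin2: assumes q: "q \<in> U" shows "linear (Gam q v)"
  by (rule linearI) (simp_all add: Gam_add2[OF q] Gam_scale2[OF q])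

lemma nabla_xi: assumes q: "q \<in> U"
  shows "frechet_derivative xi (at q) u + Gam q u (xi q) = - (Phi q *v u)"
proof -
  define Dx where "Dx = frechet_derivative xi (at q) u"
  define N where "N = Dx + Gam q u (xi q)"
  have PRphi: "((\<lambda>r. Phi r *v xi r) has_derivative
     (\<lambda>h. frechet_derivative (\<lambda>r. Phi r *v xi q) (at q) h + Phi q *v frechet_derivative xi (at q) h)) (at q)"
    by (rule PR[OF openU q]) (auto intro: fd_blin(1)[OF bl_mv Phi_diff[OF q]] xi_diff[OF q])
  have C0: "((\<lambda>r. Phi r *v xi r) has_derivative (\<lambda>h. 0)) (at q)"
    by (rule has_derivative_transform_within_open[OF has_derivative_const openU q]) (simp add: phixi)
  have A: "frechet_derivative (\<lambda>r. Phi r *v xi q) (at q) u + Phi q *v Dx = 0"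
    using fun_cong[OF has_derivative_unique[OF PRphi C0], of u] unfolding Dx_def by simp
  have g0: "Gam q u 0 = 0" using Gam_scale2[OF q, of u 0 0] by simp
  have B: "frechet_derivative (\<lambda>r. Phi r *v xi q) (at q) u - Phi q *v Gam q u (xi q) = (eta q \<bullet> u) *\<^sub>R xi q - u"
    using sasak[OF q, of u "xi q"] etaxi[OF q] eta_g[OF q, of u]
    unfolding nabla_phi_def nabla_def by (simp add: phixi[OF q] g0)
  have C: "Phi q *v N = u - (eta q \<bullet> u) *\<^sub>R xi q"
  proof -
    have "Phi q *v N = Phi q *v Dx + Phi q *v Gam q u (xi q)"
      unfolding N_def by (simp add: matrix_vector_right_distrib)
    also have "\<dots> = u - (eta q \<bullet> u) *\<^sub>R xi q"
    proof -
      have a1: "Phi q *v Dx = - frechet_derivative (\<lambda>r. Phi r *v xi q) (at q) u"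
        using A by (simp add: eq_neg_iff_add_eq_0 add.commute)
      have b1: "Phi q *v Gam q u (xi q) = frechet_derivative (\<lambda>r. Phi r *v xi q) (at q) u - ((eta q \<bullet> u) *\<^sub>R xi q - u)"
        using aux_solve3[OF B] .
      show ?thesis unfolding a1 b1 by (simp add: algebra_simps)
    qed
    finally show ?thesis .
  qed
  have PRG: "((\<lambda>r. G r *v xi r) has_derivative
     (\<lambda>h. frechet_derivative (\<lambda>r. G r *v xi q) (at q) h + G q *v frechet_derivative xi (at q) h)) (at q)"
    by (rule PR[OF openU q]) (auto intro: fd_blin(1)[OF bl_mv G_diff[OF q]] xi_diff[OF q])
  have dF: "((\<lambda>r. xi r \<bullet> (G r *v xi r)) has_derivative
     (\<lambda>h. xi q \<bullet> (frechet_derivative (\<lambda>r. G r *v xi q) (at q) h + G q *v frechet_derivative xi (at q) h)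
        + frechet_derivative xi (at q) h \<bullet> (G q *v xi q))) (at q)"
    by (rule has_derivative_inner[OF fd_works[OF xi_diff[OF q]] PRG])
  have C1: "((\<lambda>r. xi r \<bullet> (G r *v xi r)) has_derivative (\<lambda>h. 0)) (at q)"
    by (rule has_derivative_transform_within_open[OF has_derivative_const[of 1] openU q])
       (use gxixi in \<open>simp add: gm_def\<close>)
  have "xi q \<bullet> (frechet_derivative (\<lambda>r. G r *v xi q) (at q) u + G q *v Dx) + Dx \<bullet> (G q *v xi q) = 0"
    using fun_cong[OF has_derivative_unique[OF dF C1], of u] unfolding Dx_def by simp
  moreover have "frechet_derivative (\<lambda>r. G r *v xi q) (at q) u = DG q u *v xi q"
    by (rule fd_blin(2)[OF bl_mv G_diff[OF q]])
  ultimately have "dgm G q u (xi q) (xi q) + gm G q (xi q) Dx + gm G q Dx (xi q) = 0"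
    unfolding dgm_def gm_def by (simp add: inner_add_right)
  then have D1: "dgm G q u (xi q) (xi q) + 2 * gm G q Dx (xi q) = 0"
    using gm_sym[OF q, of "xi q" Dx] by simp
  have D2: "2 * gm G q (Gam q u (xi q)) (xi q) = dgm G q u (xi q) (xi q)"
    using compat[OF q, of u "xi q" "xi q"] by simp
  have etaN: "eta q \<bullet> N = 0"
    unfolding eta_g[OF q] N_def gm_add1 using D1 D2 by linarith
  have "Phi q *v (Phi q *v N) = - N" using phi2[OF q, of N] etaN by simp
  moreover have "Phi q *v (Phi q *v N) = Phi q *v u"
    unfolding C by (simp add: matrix_vector_mult_diff_distrib matrix_vector_mult_scaleR phixi[OF q])
  ultimately have "N = - (Phi q *v u)" by (metis minus_minus)
  then show ?thesis unfolding N_def Dx_def .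
qed

lemma xi_schwarz: assumes p: "p \<in> U"
  shows "frechet_derivative (\<lambda>r. frechet_derivative xi (at r) v) (at p) u =
         frechet_derivative (\<lambda>r. frechet_derivative xi (at r) u) (at p) v"
proof (rule euclidean_eqI)
  fix b :: "real^'n" assume "b \<in> Basis"
  show "frechet_derivative (\<lambda>r. frechet_derivative xi (at r) v) (at p) u \<bullet> b =
         frechet_derivative (\<lambda>r. frechet_derivative xi (at r) u) (at p) v \<bullet> b"
  proof (rule schwarz[OF openU p, of "\<lambda>r. xi r \<bullet> b" "\<lambda>r w. frechet_derivative xi (at r) w \<bullet> b"
        "\<lambda>r w z. frechet_derivative (\<lambda>r. frechet_derivative xi (at r) w) (at r) z \<bullet> b"])
    show "((\<lambda>r. xi r \<bullet> b) has_derivative (\<lambda>w. frechet_derivative xi (at q) w \<bullet> b)) (at q)" if "q \<in> U" for q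
      by (rule has_derivative_inner_left[OF fd_works[OF xi_diff[OF that]]])
    show "((\<lambda>r. frechet_derivative xi (at r) w \<bullet> b) has_derivative
       (\<lambda>z. frechet_derivative (\<lambda>r. frechet_derivative xi (at r) w) (at q) z \<bullet> b)) (at q)" if "q \<in> U" for q w
      by (rule has_derivative_inner_left[OF fd_works[OF xi_diff2[OF that]]])
    show "continuous_on U (\<lambda>q. frechet_derivative (\<lambda>r. frechet_derivative xi (at r) w) (at q) z \<bullet> b)" for w z
      by (rule bounded_linear.continuous_on[OF bounded_linear_inner_left xi2_cont])
  qed
qed

lemma curv_xi: assumes p: "p \<in> U"
  shows "curv G p u v (xi p) = (eta p \<bullet> v) *\<^sub>R u - (eta p \<bullet> u) *\<^sub>R v"
proof -
  have E: "frechet_derivative (\<lambda>r. frechet_derivative xi (at r) v) (at p) u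
      + (DGam p u v (xi p) + Gam p v (frechet_derivative xi (at p) u))
      = - frechet_derivative (\<lambda>r. Phi r *v v) (at p) u" for u v
  proof -
    have PRGam: "((\<lambda>r. Gam r v (xi r)) has_derivative
       (\<lambda>h. DGam p h v (xi p) + Gam p v (frechet_derivative xi (at p) h))) (at p)"
      by (rule PR[OF openU p]) (auto intro: Gam_lin2 Gam_diff[OF p] xi_diff[OF p])
    have L: "((\<lambda>r. frechet_derivative xi (at r) v + Gam r v (xi r)) has_derivative
       (\<lambda>h. frechet_derivative (\<lambda>r. frechet_derivative xi (at r) v) (at p) h
          + (DGam p h v (xi p) + Gam p v (frechet_derivative xi (at p) h)))) (at p)"
      by (rule has_derivative_add[OF fd_works[OF xi_diff2[OF p]] PRGam])
    have R: "((\<lambda>r. - (Phi r *v v)) has_derivative (\<lambda>h. - frechet_derivative (\<lambda>r. Phi r *v v) (at p) h)) (at p)"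
      by (rule has_derivative_minus[OF fd_works[OF fd_blin(1)[OF bl_mv Phi_diff[OF p]]]])
    have R': "((\<lambda>r. frechet_derivative xi (at r) v + Gam r v (xi r)) has_derivative
       (\<lambda>h. - frechet_derivative (\<lambda>r. Phi r *v v) (at p) h)) (at p)"
      by (rule has_derivative_transform_within_open[OF R openU p]) (simp add: nabla_xi)
    show ?thesis using fun_cong[OF has_derivative_unique[OF L R'], of u] by simp
  qed
  have Gx: "Gam p v (frechet_derivative xi (at p) u) = - Gam p v (Phi p *v u) - Gam p v (Gam p u (xi p))" for u v
  proof -
    have "frechet_derivative xi (at p) u = - (Phi p *v u) - Gam p u (xi p)"
      using nabla_xi[OF p, of u] by (simp add: algebra_simps eq_neg_iff_add_eq_0)
    then show ?thesis
      using linear_diff[OF Gam_lin2[OF p]] linear_neg[OF Gam_lin2[OF p]] by simp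
  qed
  have e1: "DGam p u v (xi p) = - frechet_derivative (\<lambda>r. Phi r *v v) (at p) u
      - frechet_derivative (\<lambda>r. frechet_derivative xi (at r) v) (at p) u
      - (- Gam p v (Phi p *v u) - Gam p v (Gam p u (xi p)))" for u v
    using aux_solve1[OF E[of v u]] unfolding Gx .
  have s: "frechet_derivative (\<lambda>q. Phi q *v v) (at p) u = gm G p u v *\<^sub>R xi p - (eta p \<bullet> v) *\<^sub>R u
      - Gam p u (Phi p *v v) + Phi p *v Gam p u v" for u v
    using aux_solve2[OF sasak[OF p, of u v, unfolded nabla_phi_def nabla_def, simplified]] .
  have D2: "frechet_derivative (\<lambda>r. frechet_derivative xi (at r) u) (at p) v =
         frechet_derivative (\<lambda>r. frechet_derivative xi (at r) v) (at p) u"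
    by (rule xi_schwarz[OF p])
  have gs: "gm G p v u = gm G p u v" by (rule gm_sym[OF p])
  have Gs: "Gam p v u = Gam p u v" by (rule Gam_sym[OF p])
  show ?thesis
    unfolding curv_eq e1 s D2 gs Gs by (simp add: algebra_simps)
qed

end

lemma ON3D:
  assumes "orthonormal_list G p [a, b, c]"
  shows "gm G p a a = 1" "gm G p b b = 1" "gm G p c c = 1"
    "gm G p a b = 0" "gm G p a c = 0" "gm G p b c = 0"
  using assms[unfolded orthonormal_list_def, rule_format, of 0 0]
    assms[unfolded orthonormal_list_def, rule_format, of 1 1]
    assms[unfolded orthonormal_list_def, rule_format, of 2 2]
    assms[unfolded orthonormal_list_def, rule_format, of 0 1]
    assms[unfolded orthonormal_list_def, rule_format, of 0 2]
    assms[unfolded orthonormal_list_def, rule_format, of 1 2]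
  by (simp_all add: numeral_2_eq_2)

lemma ON4I:
  assumes "gm G p a a = 1" "gm G p b b = 1" "gm G p c c = 1" "gm G p d d = 1"
    "gm G p a b = 0" "gm G p a c = 0" "gm G p a d = 0" "gm G p b c = 0" "gm G p b d = 0" "gm G p c d = 0"
    "gm G p b a = 0" "gm G p c a = 0" "gm G p d a = 0" "gm G p c b = 0" "gm G p d b = 0" "gm G p d c = 0"
  shows "orthonormal_list G p [a, b, c, d]"
  unfolding orthonormal_list_def
proof (intro allI impI)
  fix i j assume "i < length [a, b, c, d]" "j < length [a, b, c, d]"
  then have "i \<in> {0, 1, 2, 3}" "j \<in> {0, 1, 2, 3}" by auto
  then show "gm G p ([a, b, c, d] ! i) ([a, b, c, d] ! j) = (if i = j then 1 else 0)"
    using assms by (auto simp: numeral_2_eq_2 numeral_3_eq_3)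
qed

context sas
begin

lemma main:
  assumes x: "x \<in> U" and nn: "nonneg_phi_bisectional_on U G Phi xi"
    and ex: "eta x \<bullet> X = 0" and on: "orthonormal_list G x [X, Phi x *v X, W]"
  shows "Kcurv G x X W + Kcurv G x (Phi x *v X) W \<ge> 0"
proof -
  define Y where "Y = Phi x *v X"
  define a where "a = eta x \<bullet> W"
  define Z where "Z = W - a *\<^sub>R xi x"
  have o: "gm G x X X = 1" "gm G x Y Y = 1" "gm G x W W = 1"
    "gm G x X Y = 0" "gm G x X W = 0" "gm G x Y W = 0"
    using ON3D[OF on] unfolding Y_def by auto
  have ey: "eta x \<bullet> Y = 0" unfolding Y_def by (rule eta_phi[OF x])
  have WZ: "W = Z + a *\<^sub>R xi x" unfolding Z_def by simp
  have gxi: "gm G x u (xi x) = eta x \<bullet> u" for u using eta_g[OF x] by simp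
  have gxi': "gm G x (xi x) u = eta x \<bullet> u" for u using eta_g[OF x] gm_sym[OF x] by simp
  have ez: "eta x \<bullet> Z = 0"
    unfolding Z_def a_def using etaxi[OF x] by (simp add: inner_diff_right)
  have gZ: "gm G x Z V = gm G x W V - a * (eta x \<bullet> V)" for V
    unfolding Z_def by (simp add: gm_diff1 gm_scale1 gxi')
  have key: "Kcurv G x V W = Kcurv G x Z V + a * a"
    if V1: "gm G x V V = 1" and V2: "eta x \<bullet> V = 0" and V3: "gm G x V W = 0" for V
  proof -
    have gVZ: "gm G x Z V = 0" using gZ[of V] V2 V3 gm_sym[OF x, of W V] by simp
    have "curv G x V W (Z + a *\<^sub>R xi x) = curv G x V W Z + a *\<^sub>R curv G x V W (xi x)"
      by (simp add: curv_add3[OF x] curv_scale3[OF x])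
    then have c1: "curv G x V W W = curv G x V W Z + a *\<^sub>R curv G x V W (xi x)"
      unfolding WZ[symmetric] .
    have c2: "curv G x V W (xi x) = a *\<^sub>R V"
      unfolding curv_xi[OF x] V2 a_def by simp
    have c3: "gm G x (curv G x V W Z) V = - gm G x (curv G x V W V) Z"
      using S1[OF x, of V W Z V] by linarith
    have "curv G x V (Z + a *\<^sub>R xi x) V = curv G x V Z V + a *\<^sub>R curv G x V (xi x) V"
      by (simp add: curv_add2[OF x] curv_scale2[OF x])
    then have c4: "curv G x V W V = curv G x V Z V + a *\<^sub>R curv G x V (xi x) V"
      unfolding WZ[symmetric] .
    have c5: "gm G x (curv G x V (xi x) V) Z = 0"
    proof -
      have "gm G x (curv G x V (xi x) V) Z = gm G x (curv G x V Z V) (xi x)"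
        using pair_sym[OF x, of V "xi x" V Z] unfolding Q_def .
      also have "\<dots> = - gm G x (curv G x V Z (xi x)) V"
        using S1[OF x, of V Z V "xi x"] by linarith
      also have "\<dots> = 0"
        unfolding curv_xi[OF x] ez V2 by (simp add: gm_zero1)
      finally show ?thesis .
    qed
    have c6: "gm G x (curv G x V Z V) Z = - gm G x (curv G x V Z Z) V"
      using S1[OF x, of V Z V Z] by linarith
    have "Kcurv G x V W = gm G x (curv G x V W Z) V + a * (a * gm G x V V)"
      unfolding Kcurv_def c1 c2 by (simp add: gm_add1 gm_scale1)
    also have "\<dots> = gm G x (curv G x V Z Z) V + a * a"
      unfolding c3 c4 V1 by (simp add: gm_add1 gm_scale1 c5 c6)
    also have "gm G x (curv G x V Z Z) V = Kcurv G x Z V"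
    proof -
      have "gm G x (curv G x V Z Z) V = - gm G x (curv G x Z V Z) V"
        using curv_anti[of x V Z Z] by (simp add: gm_neg1)
      also have "\<dots> = gm G x (curv G x Z V V) Z"
        using S1[OF x, of Z V Z V] by linarith
      finally show ?thesis unfolding Kcurv_def .
    qed
    finally show ?thesis .
  qed
  have kX: "Kcurv G x X W = Kcurv G x Z X + a * a"
    by (rule key) (use o ex in auto)
  have kY: "Kcurv G x Y W = Kcurv G x Z Y + a * a"
    by (rule key) (use o ey in auto)
  have ZX: "gm G x Z X = 0" using gZ[of X] ex o gm_sym[OF x, of W X] by simp
  have ZY: "gm G x Z Y = 0" using gZ[of Y] ey o gm_sym[OF x, of W Y] by simp
  have ZXi: "gm G x Z (xi x) = 0" using gxi ez by simp
  have "Kcurv G x Z X + Kcurv G x Z Y \<ge> 0"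
  proof (cases "Z = 0")
    case True
    then show ?thesis unfolding Kcurv_def by (simp add: gm_zero2)
  next
    case False
    define c where "c = sqrt (gm G x Z Z)"
    have gzz: "gm G x Z Z > 0" using Gpos[OF x False] .
    have c0: "c > 0" unfolding c_def using gzz by simp
    have cc: "c * c = gm G x Z Z" unfolding c_def using gzz by simp
    define E where "E = (1 / c) *\<^sub>R Z"
    have ZE: "Z = c *\<^sub>R E" unfolding E_def using c0 by simp
    have EE: "gm G x E E = 1" unfolding E_def using c0 cc gzz by (simp add: gm_scale1 gm_scale2)
    have EX: "gm G x E X = 0" unfolding E_def using ZX by (simp add: gm_scale1)
    have EY: "gm G x E Y = 0" unfolding E_def using ZY by (simp add: gm_scale1)
    have EXi: "gm G x E (xi x) = 0" unfolding E_def using ZXi by (simp add: gm_scale1)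
    have sy: "gm G x u v = gm G x v u" for u v using gm_sym[OF x] by blast
    have ON: "orthonormal_list G x [E, X, Phi x *v X, xi x]"
      unfolding Y_def[symmetric]
      by (rule ON4I) (use EE EX EY EXi o gxi gxixi[OF x] ex ey sy in auto)
    have hyp: "Kcurv G x E X + Kcurv G x E (Phi x *v X) \<ge> 0"
      using nn x ON unfolding nonneg_phi_bisectional_on_def by blast
    have sc: "Kcurv G x Z V = (c * c) * Kcurv G x E V" for V
      unfolding Kcurv_def ZE by (simp add: curv_scale1[OF x] gm_scale1 gm_scale2)
    show ?thesis unfolding sc Y_def using hyp c0
      by (metis distrib_left mult_nonneg_nonneg mult_pos_pos less_imp_le)
  qed
  then show ?thesis unfolding Y_def[symmetric] kX kY by simp
qed

end

theorem proposition3p9: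
  fixes U :: "(real^'n) set" and G Phi :: "real^'n \<Rightarrow> real^'n^'n"
    and xi eta :: "real^'n \<Rightarrow> real^'n" and x X W :: "real^'n"
  assumes "sasakian_on U G Phi xi eta"
    and "nonneg_phi_bisectional_on U G Phi xi"
    and "x \<in> U"
    and "eta x \<bullet> X = 0"
    and "orthonormal_list G x [X, Phi x *v X, W]"
  shows "Rtensor G x X W X W + Rtensor G x (Phi x *v X) W (Phi x *v X) W \<ge> 0"
proof -
  interpret sas U G Phi xi eta by (rule sas.intro) (rule assms(1))
  show ?thesis
    using main[OF assms(3) assms(2) assms(4) assms(5)] unfolding Rtensor_def Kcurv_def .
qed

end
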